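(* Let $m\ge5$ be odd and $h=\frac{m-1}{2}$. For every $j\in\Gamma_{(h)}$: (i) if $j\neq1$, then $j+2^{h+1}$ is the coset leader of $C_{j+2^{h+1}}$, and the coset leader of $C_{1+2^{h+1}}$ is $1+2^h$; (ii) $|C_{j+2^{h+1}}|=m$.
   Context: Let $v=2^m-1$. For an integer $i$, $C_i=\{i\cdot 2^s \bmod v: s\ge 0\}$ is the $2$-cyclotomic coset of $i$ modulo $v$, and its least element is its coset leader. For a positive integer $t$, $\Gamma_{(t)}=\{j:1\le j\le 2^t-1,\ j\text{ odd}\}$. *)

theory Defs
  imports Main
begin

definition cyc_coset :: "nat \<Rightarrow> nat \<Rightarrow> nat set" where
  "cyc_coset m i = {(i * 2 ^ s) mod (2 ^ m - 1) | s. True}"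

definition coset_leader :: "nat \<Rightarrow> nat \<Rightarrow> nat" where
  "coset_leader m i = Min (cyc_coset m i)"

definition Gamma :: "nat \<Rightarrow> nat set" where
  "Gamma t = {j. 1 \<le> j \<and> j \<le> 2 ^ t - 1 \<and> odd j}"

end

theory Submission imports Defs begin

lemma pow_period:
  fixes m i s :: nat assumes "m \<ge> 2"
  shows "i * 2 ^ s mod (2^m - 1) = i * 2 ^ (s mod m) mod (2^m - 1)"
proof -
  define N where "N = 2^m - (1::nat)"
  have "(2::nat)^m \<ge> 2^2" using assms by (rule power_increasing) simp
  hence N1: "N > 1" unfolding N_def by simp
  have e: "(2::nat)^m = N + 1" using N1 unfolding N_def by simp
  have m1: "2^m mod N = 1" unfolding e using N1 by (simp add: mod_Suc)
  have "(2^m)^(s div m) mod N = (2^m mod N)^(s div m) mod N" by (rule power_mod[symmetric])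
  hence pk: "(2^m)^(s div m) mod N = 1" unfolding m1 using N1 by simp
  have "(2::nat)^s = 2^(s mod m) * (2^m)^(s div m)"
    unfolding power_mult[symmetric] power_add[symmetric] by simp
  hence "i * 2^s = (i * 2^(s mod m)) * (2^m)^(s div m)" by simp
  hence "i * 2^s mod N = ((i * 2^(s mod m)) * ((2^m)^(s div m) mod N)) mod N"
    by (simp only: mod_mult_right_eq)
  hence "i * 2^s mod N = i * 2^(s mod m) mod N" by (simp only: pk mult_1_right)
  thus ?thesis unfolding N_def .
qed

lemma coset_eq:
  fixes m i :: nat assumes "m \<ge> 2"
  shows "cyc_coset m i = (\<lambda>s. i*2^s mod (2^m-1)) ` {..<m}"
proof
  show "cyc_coset m i \<subseteq> (\<lambda>s. i*2^s mod (2^m-1)) ` {..<m}"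
  proof
    fix y assume "y \<in> cyc_coset m i"
    then obtain s where "y = i*2^s mod (2^m-1)" unfolding cyc_coset_def by blast
    hence "y = i*2^(s mod m) mod (2^m-1)" using pow_period[OF assms] by simp
    moreover have "s mod m < m" using assms by simp
    ultimately show "y \<in> (\<lambda>s. i*2^s mod (2^m-1)) ` {..<m}" by blast
  qed
  show "(\<lambda>s. i*2^s mod (2^m-1)) ` {..<m} \<subseteq> cyc_coset m i"
    unfolding cyc_coset_def by blast
qed


lemma vals:
  fixes h j s :: nat
  assumes h: "h \<ge> 2" and j: "odd j" "j < 2^h" and s: "0 < s" "s < 2*h+1"
  defines "x \<equiv> j + 2^(h+1)" and "N \<equiv> 2^(2*h+1) - (1::nat)"
  shows "x*2^s mod N \<noteq> x \<and> ((j \<noteq> 1 \<or> s \<noteq> h) \<longrightarrow> x*2^s mod N > x)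
         \<and> (s = h \<longrightarrow> x*2^s mod N = 1 + j*2^h)"
proof -
  have j1: "j \<ge> 1" using j by (cases j) auto
  have M: "(2::nat)^(2*h+1) = N + 1" unfolding N_def by simp
  have xlt: "x < 2^h + 2^(h+1)" unfolding x_def using j by simp
  consider "s < h" | "s = h" | "s > h" by linarith
  thus ?thesis
  proof cases
    case 1
    have e: "x*2^s = j*2^s + 2^(h+1+s)" by (simp add: x_def algebra_simps power_add)
    have a: "j*2^s < 2^(h+s)" using j by (simp add: power_add)
    have b0: "(2::nat)^(h+1+s) * 2 = 2^(h+2+s)" by simp
    have "(2::nat)^(h+2+s) \<le> 2^(2*h+1)" using 1 by (intro power_increasing) auto
    hence b: "(2::nat)^(h+1+s) * 2 \<le> 2^(2*h+1)" using b0 by simp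
    have c: "(2::nat)^(h+1+s) = 2*2^(h+s)" by simp
    have p: "(2::nat)^(h+s) \<ge> 1" by simp
    have lt: "x*2^s < N" using e a b c p M by linarith
    hence y: "x*2^s mod N = j*2^s + 2^(h+1+s)" using e by simp
    have "(2::nat)^(h+1+s) \<ge> 2^(h+2)" using s by (intro power_increasing) auto
    hence "x*2^s mod N > x" using y xlt by simp
    thus ?thesis using 1 by simp
  next
    case 2
    have hh: "(2::nat)^(h+1)*2^h = 2^(2*h+1)" by (simp add: power_add[symmetric])
    have e: "x*2^s = (j*2^h + 1) + N" using M hh unfolding x_def 2 by (simp add: algebra_simps)
    have a: "j*2^h < 2^(2*h)" using j by (simp add: mult_2 power_add)
    have "(2::nat)^(2*h) \<ge> 2^1" using h by (intro power_increasing) auto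
    hence lt: "j*2^h + 1 < N" using a M by simp
    have y: "x*2^s mod N = j*2^h + 1" unfolding e using lt by (metis mod_add_self2 mod_less)
    show ?thesis
    proof (cases "j = 1")
      case True
      have "(2::nat)^h < 2^(h+1)" by simp
      thus ?thesis using y 2 True x_def by auto
    next
      case False
      hence "j \<ge> 3" using j j1 by presburger
      hence "j*2^h \<ge> 3*2^h" by simp
      moreover have "(2::nat)^(h+1) = 2*2^h" by simp
      ultimately have "x*2^s mod N > x" using y xlt by linarith
      thus ?thesis using 2 y by simp
    qed
  next
    case 3
    define t where "t = s - h - 1"
    define u where "u = h - t"
    have st: "s = h+1+t" "t < h" using 3 s unfolding t_def by auto
    have u1: "u \<ge> 1" "u + t = h" unfolding u_def using st by auto
    define a where "a = j div 2^u"
    define b where "b = j mod 2^u"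
    have jab: "j = a*2^u + b" unfolding a_def b_def by (metis div_mult_mod_eq)
    have us: "(2::nat)^u * 2^s = 2^(2*h+1)" using u1 st by (simp add: power_add[symmetric])
    have hs: "(2::nat)^(h+1) * 2^s = 2^(2*h+1) * 2^(1+t)" using st by (simp add: power_add[symmetric])
    have e0: "x*2^s = a*(2^u*2^s) + b*2^s + 2^(h+1)*2^s" unfolding x_def jab by (simp add: algebra_simps)
    have e: "x*2^s = (a + b*2^s + 2^(1+t)) + N*(a + 2^(1+t))"
      unfolding e0 us hs M by (simp add: algebra_simps)
    have "j < 2^t * 2^u" using j u1 by (simp add: power_add[symmetric] add.commute)
    hence alt: "a < 2^t" unfolding a_def by (rule less_mult_imp_div_less)
    have blt: "b < 2^u" unfolding b_def by simp
    hence "(b+1)*2^s \<le> 2^u*2^s" by (intro mult_right_mono) auto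
    hence bb: "b*2^s + 2^s \<le> N + 1" using us M by simp
    have "(2::nat)^s \<ge> 2^(t+3)" using st h by (intro power_increasing) auto
    moreover have "(2::nat)^(t+3) = 8*2^t" by (simp add: power_add)
    ultimately have ss: "(2::nat)^s \<ge> 8*2^t" by simp
    have lt: "a + b*2^s + 2^(1+t) < N" using alt bb ss by simp
    have y: "x*2^s mod N = a + b*2^s + 2^(1+t)" unfolding e mod_mult_self2 using lt by (rule mod_less)
    have "even ((2::nat)^u)" using u1 by simp
    hence bodd: "odd b" using jab j(1) by auto
    hence b1: "b \<ge> 1" by (cases b) auto
    have gt: "x*2^s mod N > x"
    proof (cases "t = 0")
      case True
      hence "u = h" using u1 by simp
      hence "a = 0" "b = j" unfolding a_def b_def using j by auto
      hence y2: "x*2^s mod N = j*2^(h+1) + 2" using y st True by simp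
      have "j*2^(h+1) \<ge> j + 2^(h+1) - 1"
      proof -
        obtain k where k: "j = Suc k" using j1 by (cases j) auto
        have "k * 2^(h+1) \<ge> k" by simp
        thus ?thesis using k by simp
      qed
      thus ?thesis using y2 x_def by simp
    next
      case False
      have "(2::nat)^s \<ge> 2^(h+2)" using st False by (intro power_increasing) auto
      hence "b*2^s \<ge> 2^(h+2)" using b1
        by (metis le_trans mult_le_mono1 mult_1)
      thus ?thesis using y xlt by simp
    qed
    thus ?thesis using 3 by simp
  qed
qed


lemma inj_vals:
  fixes h j :: nat
  assumes h: "h \<ge> 2" and j: "odd j" "j < 2^h"
  shows "inj_on (\<lambda>s. (j + 2^(h+1))*2^s mod (2^(2*h+1)-1)) {..<2*h+1}"
proof -
  define x where "x = j + 2^(h+1)"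
  define N where "N = 2^(2*h+1) - (1::nat)"
  define m where "m = 2*h+1"
  have m2: "m \<ge> 2" using h unfolding m_def by simp
  have per: "\<And>s. x*2^s mod N = x*2^(s mod m) mod N"
    unfolding N_def m_def by (rule pow_period[OF m2[unfolded m_def]])
  have xN: "x < N"
  proof -
    have "x < 2^h + 2^(h+1)" using j unfolding x_def by simp
    moreover have "(2::nat)^(h+2) \<le> 2^(2*h)" using h by (intro power_increasing) auto
    moreover have "(2::nat)^(2*h+1) = 2*2^(2*h)" by simp
    moreover have "(2::nat)^(h+2) = 4*2^h" "(2::nat)^(h+1) = 2*2^h" by simp_all
    ultimately show ?thesis unfolding N_def by linarith
  qed
  have neq: "\<And>d. 0 < d \<Longrightarrow> d < m \<Longrightarrow> x*2^d mod N \<noteq> x"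
    using vals[OF h j] unfolding x_def N_def m_def by blast
  have key: "\<And>r s. r < s \<Longrightarrow> s < m \<Longrightarrow> x*2^r mod N = x*2^s mod N \<Longrightarrow> False"
  proof -
    fix r s :: nat assume rs: "r < s" "s < m" and eq: "x*2^r mod N = x*2^s mod N"
    define c where "c = (2::nat)^(m-r)"
    have "(x*2^r)*c mod N = ((x*2^r) mod N)*c mod N" by (rule mod_mult_left_eq[symmetric])
    also have "\<dots> = ((x*2^s) mod N)*c mod N" by (simp only: eq)
    also have "\<dots> = (x*2^s)*c mod N" by (rule mod_mult_left_eq)
    finally have e0: "(x*2^r)*c mod N = (x*2^s)*c mod N" .
    have p1: "(2::nat)^r * c = 2^m"
    proof -
      have "r + (m-r) = m" using rs by simp
      thus ?thesis unfolding c_def by (simp only: power_add[symmetric])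
    qed
    have p2: "(2::nat)^s * c = 2^((s-r)+m)"
    proof -
      have "s + (m-r) = (s-r)+m" using rs by simp
      thus ?thesis unfolding c_def by (simp only: power_add[symmetric])
    qed
    have "x*2^m mod N = x*2^((s-r)+m) mod N"
      using e0 by (simp only: mult.assoc p1 p2)
    moreover have "x*2^m mod N = x*2^(m mod m) mod N" by (rule per)
    moreover have "x*2^((s-r)+m) mod N = x*2^(((s-r)+m) mod m) mod N" by (rule per)
    moreover have "((s-r)+m) mod m = s-r"
    proof -
      have "((s-r)+m) mod m = (s-r) mod m" by (rule mod_add_self2)
      thus ?thesis using rs by simp
    qed
    moreover have "x*2^(m mod m) mod N = x" using xN by simp
    ultimately have "x*2^(s-r) mod N = x" by simp
    moreover have "x*2^(s-r) mod N \<noteq> x" using neq rs by simp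
    ultimately show False by simp
  qed
  show ?thesis
  proof (rule inj_onI)
    fix r s assume "r \<in> {..<2*h+1}" "s \<in> {..<2*h+1}"
      and eq: "(j + 2^(h+1))*2^r mod (2^(2*h+1)-1) = (j + 2^(h+1))*2^s mod (2^(2*h+1)-1)"
    hence rs: "r < m" "s < m" and eq': "x*2^r mod N = x*2^s mod N"
      unfolding x_def N_def m_def by auto
    show "r = s"
    proof (rule ccontr)
      assume "r \<noteq> s"
      hence "r < s \<or> s < r" by arith
      thus False using key[of r s] key[of s r] rs eq' by auto
    qed
  qed
qed

theorem lemma9:
  fixes m h j :: nat
  assumes "m \<ge> 5" and "odd m" and "h = (m - 1) div 2" and "j \<in> Gamma h"
  shows "(j \<noteq> 1 \<longrightarrow> coset_leader m (j + 2 ^ (h + 1)) = j + 2 ^ (h + 1))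
       \<and> coset_leader m (1 + 2 ^ (h + 1)) = 1 + 2 ^ h
       \<and> card (cyc_coset m (j + 2 ^ (h + 1))) = m"
proof -
  have m: "m = 2*h+1" using assms(2,3) by presburger
  have h: "h \<ge> 2" using assms(1) m by simp
  have jG: "odd j" "j \<le> 2^h - 1" using assms(4) unfolding Gamma_def by auto
  have "(2::nat)^h > 0" by simp
  hence j: "odd j" "j < 2^h" using jG by linarith+
  have m2: "m \<ge> 2" using m h by simp
  have xlt: "\<And>j::nat. j < 2^h \<Longrightarrow> j + 2^(h+1) < 2^(2*h+1) - 1"
  proof -
    fix j :: nat assume "j < 2^h"
    moreover have "(2::nat)^(h+2) \<le> 2^(2*h)" using h by (intro power_increasing) auto
    moreover have "(2::nat)^(2*h+1) = 2*2^(2*h)" by simp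
    moreover have "(2::nat)^(h+2) = 4*2^h" "(2::nat)^(h+1) = 2*2^h" by simp_all
    ultimately show "j + 2^(h+1) < 2^(2*h+1) - 1" by linarith
  qed
  have C: "\<And>i. cyc_coset m i = (\<lambda>s. i*2^s mod (2^(2*h+1)-1)) ` {..<2*h+1}"
    using coset_eq[OF m2] m by simp
  have P1: "j \<noteq> 1 \<longrightarrow> coset_leader m (j + 2 ^ (h + 1)) = j + 2 ^ (h + 1)"
  proof
    assume j1: "j \<noteq> 1"
    let ?x = "j + 2^(h+1)"
    have mem: "?x \<in> cyc_coset m ?x" unfolding C using xlt[OF j(2)]
      by (auto intro!: image_eqI[of _ _ 0])
    have ge: "\<forall>y \<in> cyc_coset m ?x. ?x \<le> y"
    proof
      fix y assume "y \<in> cyc_coset m ?x"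
      then obtain s where s: "s < 2*h+1" "y = ?x*2^s mod (2^(2*h+1)-1)" unfolding C by auto
      show "?x \<le> y"
      proof (cases "s = 0")
        case True thus ?thesis using s xlt[OF j(2)] by simp
      next
        case False thus ?thesis using vals[OF h j, of s] s j1 by auto
      qed
    qed
    have "finite (cyc_coset m ?x)" unfolding C by simp
    thus "coset_leader m ?x = ?x" unfolding coset_leader_def using mem ge
      by (metis Min_eqI)
  qed
  have P2: "coset_leader m (1 + 2 ^ (h + 1)) = 1 + 2 ^ h"
  proof -
    let ?x = "1 + 2^(h+1) :: nat"
    have "(2::nat)^h \<ge> 2^1" using h by (intro power_increasing) auto
    hence j': "odd (1::nat)" "(1::nat) < 2^h" by auto
    have mem: "1 + 2^h \<in> cyc_coset m ?x" unfolding C using vals[OF h j', of h] h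
      by (auto intro!: image_eqI[of _ _ h])
    have ge: "\<forall>y \<in> cyc_coset m ?x. 1 + 2^h \<le> y"
    proof
      fix y assume "y \<in> cyc_coset m ?x"
      then obtain s where s: "s < 2*h+1" "y = ?x*2^s mod (2^(2*h+1)-1)" unfolding C by auto
      have hh: "(2::nat)^h < 2^(h+1)" by simp
      show "1 + 2^h \<le> y"
      proof (cases "s = 0")
        case True thus ?thesis using s xlt[OF j'(2)] hh by simp
      next
        case False
        show ?thesis
        proof (cases "s = h")
          case True
          have s0: "0 < s" "s < 2*h+1" using False s by auto
          have "y = 1 + 1*2^h" using vals[OF h j' s0] True s(2) by blast
          thus ?thesis by simp
        next
          case F2: False
          have s0: "0 < s" "s < 2*h+1" using False s by auto
          have "y > ?x" using vals[OF h j' s0] F2 s(2) by blast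
          thus ?thesis using hh by simp
        qed
      qed
    qed
    have "finite (cyc_coset m ?x)" unfolding C by simp
    thus ?thesis unfolding coset_leader_def using mem ge
      by (metis Min_eqI)
  qed
  have P3: "card (cyc_coset m (j + 2 ^ (h + 1))) = m"
    unfolding C using card_image[OF inj_vals[OF h j]] m by simp
  show ?thesis using P1 P2 P3 by blast
qed

end
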